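(* There are absolute constants $c,C>0$ such that the following holds. Let $G$ be a finite abelian group, let $A\subset G$ be nonempty, and let $\alpha=|A|/|G|$. Then there exist a set of characters $S\subset\hat G$ with $|S|\le C\log(2/\alpha)$, a radius $\rho\ge c/\log(2/\alpha)$, and a positive integer $k\le C\log(2/\alpha)$ such that the Bohr set $B(S,\rho)$ satisfies $B(S,\rho)\subset kA-kA$.
   Context: $\hat G$ is the group of homomorphisms $G\to S^1=\{z\in\mathbb{C}:|z|=1\}$. For $S\subset\hat G$ and $\rho>0$, $B(S,\rho)=\{x\in G:|\gamma(x)-1|\le\rho\text{ for all }\gamma\in S\}$; $|S|$ is its rank and $\rho$ its radius. $kA-kA=\{a_1+\dots+a_k-b_1-\dots-b_k:a_i,b_i\in A\}$. $\log$ is natural. *)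

theory Defs
  imports Complex_Main "HOL-Algebra.Algebra"
begin

definition characters :: "('a, 'b) monoid_scheme \<Rightarrow> ('a \<Rightarrow> complex) set" where
  "characters G = {\<gamma>. \<gamma> \<in> extensional (carrier G)
      \<and> (\<forall>x\<in>carrier G. cmod (\<gamma> x) = 1)
      \<and> (\<forall>x\<in>carrier G. \<forall>y\<in>carrier G. \<gamma> (x \<otimes>\<^bsub>G\<^esub> y) = \<gamma> x * \<gamma> y)}"

definition bohr_set :: "('a, 'b) monoid_scheme \<Rightarrow> ('a \<Rightarrow> complex) set \<Rightarrow> real \<Rightarrow> 'a set" where
  "bohr_set G S \<rho> = {x \<in> carrier G. \<forall>\<gamma>\<in>S. cmod (\<gamma> x - 1) \<le> \<rho>}"

text \<open>k-fold sumset kA (in multiplicative notation: products of k elements of A).\<close>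
fun ksum :: "('a, 'b) monoid_scheme \<Rightarrow> nat \<Rightarrow> 'a set \<Rightarrow> 'a set" where
  "ksum G 0 A = {\<one>\<^bsub>G\<^esub>}"
| "ksum G (Suc k) A = {a \<otimes>\<^bsub>G\<^esub> s | a s. a \<in> A \<and> s \<in> ksum G k A}"

definition kdiff :: "('a, 'b) monoid_scheme \<Rightarrow> nat \<Rightarrow> 'a set \<Rightarrow> 'a set" where
  "kdiff G k A = {x \<otimes>\<^bsub>G\<^esub> inv\<^bsub>G\<^esub> y | x y. x \<in> ksum G k A \<and> y \<in> ksum G k A}"

end

theory Submission
  imports Defs "HOL-Analysis.Convex"
begin


lemma chord_exp:
  fixes t u :: real
  assumes u: "\<bar>u\<bar> \<le> 1"
  shows "exp (t * u) \<le> (exp t + exp (- t)) / 2 + (exp t - exp (- t)) / 2 * u"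
proof -
  define \<theta> where "\<theta> = (1 + u) / 2"
  have th: "0 \<le> \<theta>" "\<theta> \<le> 1" using u unfolding \<theta>_def by auto
  have "exp ((1 - \<theta>) *\<^sub>R (- t) + \<theta> *\<^sub>R t) \<le> (1 - \<theta>) * exp (- t) + \<theta> * exp t"
    using convex_onD[OF exp_convex th UNIV_I UNIV_I, where x="- t" and y=t] .
  moreover have "(1 - \<theta>) *\<^sub>R (- t) + \<theta> *\<^sub>R t = t * u" unfolding \<theta>_def by (simp add: field_simps)
  moreover have "(1 - \<theta>) * exp (- t) + \<theta> * exp t = (exp t + exp (- t)) / 2 + (exp t - exp (- t)) / 2 * u"
    unfolding \<theta>_def by (simp add: field_simps)
  ultimately show ?thesis by simp
qed

lemma cosh_quarter: "(exp (1/4::real) + exp (- (1/4))) / 2 \<le> 169 / 160"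
proof -
  have e1: "exp (1/4::real) \<le> 1 + 1/4 + (1/4)\<^sup>2" by (rule exp_bound) auto
  have e2: "1 + 1/4 \<le> exp (1/4::real)" by (rule exp_ge_add_one_self)
  have "exp (- (1/4::real)) = 1 / exp (1/4)" by (simp add: exp_minus field_simps)
  also have "\<dots> \<le> 1 / (1 + 1/4)" using e2 by (intro divide_left_mono) auto
  finally have e3: "exp (- (1/4::real)) \<le> 4/5" by simp
  show ?thesis using e1 e3 by (simp add: power2_eq_square)
qed

lemma exp_eighth: "9/8 \<le> exp (1/8::real)"
  using exp_ge_add_one_self[of "1/8::real"] by simp

lemma ln_17_16: "1/17 \<le> ln (17/16::real)"
proof -
  have "exp (- (1/17::real)) \<ge> 1 - 1/17" using exp_ge_add_one_self[of "- (1/17::real)"] by simp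
  then have "exp (1/17::real) \<le> 17/16"
    by (simp add: exp_minus field_simps)
  then show ?thesis by (subst ln_ge_iff) auto
qed


definition cpw :: "complex \<Rightarrow> int \<Rightarrow> complex" where
  "cpw z e = (if e = 1 then z else if e = -1 then cnj z else 1)"

locale fab = comm_group G for G :: "('a, 'b) monoid_scheme" (structure) +
  assumes fin: "finite (carrier G)"
begin

lemma char_mult: "\<gamma> \<in> characters G \<Longrightarrow> x \<in> carrier G \<Longrightarrow> y \<in> carrier G \<Longrightarrow> \<gamma> (x \<otimes> y) = \<gamma> x * \<gamma> y"
  by (simp add: characters_def)

lemma char_norm: "\<gamma> \<in> characters G \<Longrightarrow> x \<in> carrier G \<Longrightarrow> cmod (\<gamma> x) = 1"
  by (simp add: characters_def)

lemma char_nz: "\<gamma> \<in> characters G \<Longrightarrow> x \<in> carrier G \<Longrightarrow> \<gamma> x \<noteq> 0"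
  using char_norm by fastforce

lemma char_one: "\<gamma> \<in> characters G \<Longrightarrow> \<gamma> \<one> = 1"
proof -
  assume g: "\<gamma> \<in> characters G"
  have "\<gamma> \<one> = \<gamma> \<one> * \<gamma> \<one>" using char_mult[OF g, of \<one> \<one>] by simp
  moreover have "\<gamma> \<one> \<noteq> 0" using char_nz[OF g] by simp
  ultimately show ?thesis by (metis mult_cancel_left2)
qed

lemma cnj_unit: "cmod z = 1 \<Longrightarrow> z * cnj z = 1"
  by (metis complex_norm_square mult.commute of_real_1 power_one)

lemma char_inv: "\<gamma> \<in> characters G \<Longrightarrow> x \<in> carrier G \<Longrightarrow> \<gamma> (inv x) = cnj (\<gamma> x)"
proof -
  assume g: "\<gamma> \<in> characters G" and x: "x \<in> carrier G"
  have "\<gamma> x * \<gamma> (inv x) = 1" using char_mult[OF g x, of "inv x"] x char_one[OF g] by simp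
  moreover have "\<gamma> x * cnj (\<gamma> x) = 1" using cnj_unit char_norm[OF g x] by blast
  ultimately show ?thesis using char_nz[OF g x] by (metis mult_cancel_left)
qed

lemma char_pow: "\<gamma> \<in> characters G \<Longrightarrow> x \<in> carrier G \<Longrightarrow> \<gamma> (x [^] (n::nat)) = \<gamma> x ^ n"
  by (induction n) (simp_all add: char_one char_mult)

lemma order_pos: "order G > 0"
  using fin unfolding order_def by (metis card_gt_0_iff one_closed empty_iff)

lemma finite_characters: "finite (characters G)"
proof -
  let ?U = "{z::complex. z ^ order G = 1}"
  have U: "finite ?U" by (rule finite_roots_unity) (use order_pos in auto)
  have "characters G \<subseteq> PiE (carrier G) (\<lambda>_. ?U)"
  proof
    fix \<gamma> assume g: "\<gamma> \<in> characters G"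
    have "\<gamma> x ^ order G = 1" if "x \<in> carrier G" for x
      using char_pow[OF g that, of "order G"] pow_order_eq_1[OF that] char_one[OF g] by simp
    then show "\<gamma> \<in> PiE (carrier G) (\<lambda>_. ?U)" using g by (auto simp: characters_def PiE_def)
  qed
  then show ?thesis using finite_PiE[OF fin, of "\<lambda>_. ?U"] U finite_subset by blast
qed

definition triv :: "'a \<Rightarrow> complex" where "triv = (\<lambda>x. if x \<in> carrier G then 1 else undefined)"

lemma triv_char: "triv \<in> characters G"
  by (auto simp: characters_def triv_def extensional_def)

definition cmul :: "('a \<Rightarrow> complex) \<Rightarrow> ('a \<Rightarrow> complex) \<Rightarrow> 'a \<Rightarrow> complex" where
  "cmul \<delta> \<gamma> = (\<lambda>x. if x \<in> carrier G then \<delta> x * \<gamma> x else undefined)"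

definition cconj :: "('a \<Rightarrow> complex) \<Rightarrow> 'a \<Rightarrow> complex" where
  "cconj \<delta> = (\<lambda>x. if x \<in> carrier G then cnj (\<delta> x) else undefined)"

lemma cmul_char: "\<delta> \<in> characters G \<Longrightarrow> \<gamma> \<in> characters G \<Longrightarrow> cmul \<delta> \<gamma> \<in> characters G"
  by (auto simp: characters_def cmul_def extensional_def norm_mult)

lemma cconj_char: "\<delta> \<in> characters G \<Longrightarrow> cconj \<delta> \<in> characters G"
  by (auto simp: characters_def cconj_def extensional_def)

lemma char_ext: "\<gamma> \<in> characters G \<Longrightarrow> \<delta> \<in> characters G \<Longrightarrow> (\<And>x. x \<in> carrier G \<Longrightarrow> \<gamma> x = \<delta> x) \<Longrightarrow> \<gamma> = \<delta>"
  unfolding characters_def by (auto intro: extensionalityI)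

lemma lmul_bij: "a \<in> carrier G \<Longrightarrow> bij_betw (\<lambda>x. a \<otimes> x) (carrier G) (carrier G)"
  by (rule bij_betw_byWitness[where f'="\<lambda>x. inv a \<otimes> x"]) (auto simp: m_assoc[symmetric])

lemma sum_mult_zero:
  assumes m: "\<And>x y. x \<in> carrier G \<Longrightarrow> y \<in> carrier G \<Longrightarrow> f (x \<otimes> y) = f x * (f y :: complex)"
    and x0: "x0 \<in> carrier G" and ne: "f x0 \<noteq> 1"
  shows "(\<Sum>x\<in>carrier G. f x) = 0"
proof -
  have bij: "bij_betw (\<lambda>x. x0 \<otimes> x) (carrier G) (carrier G)"
    using x0 by (rule lmul_bij)
  have "(\<Sum>x\<in>carrier G. f x) = (\<Sum>x\<in>carrier G. f (x0 \<otimes> x))"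
    using sum.reindex_bij_betw[OF bij, of f] by simp
  also have "\<dots> = f x0 * (\<Sum>x\<in>carrier G. f x)"
    using x0 by (simp add: m sum_distrib_left)
  finally show ?thesis using ne by (metis mult_cancel_right1 right_minus_eq eq_iff_diff_eq_0 mult_eq_0_iff left_diff_distrib' mult_1)
qed

definition subm :: "'a set \<Rightarrow> bool" where
  "subm H \<longleftrightarrow> H \<subseteq> carrier G \<and> \<one> \<in> H \<and> (\<forall>x\<in>H. \<forall>y\<in>H. x \<otimes> y \<in> H)"

definition pchar :: "'a set \<Rightarrow> ('a \<Rightarrow> complex) \<Rightarrow> bool" where
  "pchar H \<chi> \<longleftrightarrow> (\<forall>x\<in>H. cmod (\<chi> x) = 1) \<and> (\<forall>x\<in>H. \<forall>y\<in>H. \<chi> (x \<otimes> y) = \<chi> x * \<chi> y)"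

lemma subm_pow: "subm H \<Longrightarrow> h \<in> H \<Longrightarrow> h [^] (n::nat) \<in> H"
proof (induction n)
  case 0 then show ?case by (simp add: subm_def)
next
  case (Suc n) then show ?case by (simp add: subm_def)
qed

lemma inv_pow: "h \<in> carrier G \<Longrightarrow> inv h = h [^] (order G - 1)"
proof -
  assume h: "h \<in> carrier G"
  have "h [^] (order G - 1) \<otimes> h = h [^] (Suc (order G - 1))" by simp
  also have "Suc (order G - 1) = order G" using order_pos by simp
  finally have "h [^] (order G - 1) \<otimes> h = \<one>" using pow_order_eq_1[OF h] by simp
  then show ?thesis using inv_equality h by simp
qed

lemma subm_inv: "subm H \<Longrightarrow> h \<in> H \<Longrightarrow> inv h \<in> H"
  using inv_pow subm_pow unfolding subm_def by (metis subsetD)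

lemma pchar_one: "subm H \<Longrightarrow> pchar H \<chi> \<Longrightarrow> \<chi> \<one> = 1"
proof -
  assume H: "subm H" and c: "pchar H \<chi>"
  have o: "\<one> \<in> H" using H by (simp add: subm_def)
  have "\<chi> \<one> = \<chi> \<one> * \<chi> \<one>" using c o unfolding pchar_def by (metis l_one one_closed)
  moreover have "\<chi> \<one> \<noteq> 0" using c o unfolding pchar_def by fastforce
  ultimately show ?thesis by (metis mult_cancel_left2)
qed

lemma pchar_pow: "subm H \<Longrightarrow> pchar H \<chi> \<Longrightarrow> h \<in> H \<Longrightarrow> \<chi> (h [^] (n::nat)) = \<chi> h ^ n"
proof (induction n)
  case 0 then show ?case using pchar_one by simp
next
  case (Suc n)
  then show ?case using subm_pow[OF Suc(2,4), of n] unfolding pchar_def by simp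
qed

lemma ext_step:
  assumes H: "subm H" and c: "pchar H \<chi>" and g: "g \<in> carrier G" and n: "0 < n"
    and gn: "g [^] n \<in> H" and least: "\<And>m. 0 < m \<Longrightarrow> m < n \<Longrightarrow> g [^] m \<notin> H"
    and w: "cmod w = 1" and wn: "w ^ n = \<chi> (g [^] n)"
  shows "\<exists>H' \<chi>'. subm H' \<and> pchar H' \<chi>' \<and> H \<subseteq> H' \<and> g \<in> H' \<and> (\<forall>h\<in>H. \<chi>' h = \<chi> h) \<and> \<chi>' g = w"
proof -
  have Hc: "H \<subseteq> carrier G" using H by (simp add: subm_def)
  have K: "\<chi> (g [^] m) = w ^ m" if gm: "g [^] m \<in> H" for m :: nat
  proof -
    define q r where "q = m div n" and "r = m mod n"
    have m: "m = n * q + r" by (simp add: q_def r_def)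
    have "g [^] m = (g [^] n) [^] q \<otimes> g [^] r" using g by (simp add: m nat_pow_pow nat_pow_mult)
    then have "g [^] r = inv ((g [^] n) [^] q) \<otimes> g [^] m" using g
      by (simp add: inv_solve_left)
    then have "g [^] r \<in> H" using H gm gn subm_pow subm_inv unfolding subm_def by metis
    then have "r = 0" using least[of r] r_def n by (meson mod_less_divisor not_gr_zero)
    then have "g [^] m = (g [^] n) [^] q" using g m by (simp add: nat_pow_pow)
    then have "\<chi> (g [^] m) = \<chi> (g [^] n) ^ q" using pchar_pow[OF H c gn] by simp
    also have "\<dots> = w ^ m" using wn m \<open>r = 0\<close> by (simp add: power_mult)
    finally show ?thesis .
  qed
  have wd1: "\<chi> h1 * w ^ i = \<chi> h2 * w ^ j"
    if h1: "h1 \<in> H" and h2: "h2 \<in> H" and ij: "i \<le> j" and eq: "h1 \<otimes> g [^] i = h2 \<otimes> g [^] j" for h1 h2 i j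
  proof -
    have h1c: "h1 \<in> carrier G" and h2c: "h2 \<in> carrier G" using h1 h2 Hc by auto
    have "g [^] j = g [^] (j - i) \<otimes> g [^] i" using g ij by (simp add: nat_pow_mult)
    then have "h1 \<otimes> g [^] i = (h2 \<otimes> g [^] (j - i)) \<otimes> g [^] i" using eq g h2c by (simp add: m_assoc)
    then have e: "h1 = h2 \<otimes> g [^] (j - i)" using g h1c h2c by simp
    then have "g [^] (j - i) = inv h2 \<otimes> h1" using g h2c by (simp add: inv_solve_left)
    then have gji: "g [^] (j - i) \<in> H" using H h1 h2 subm_inv unfolding subm_def by metis
    have "\<chi> h1 = \<chi> h2 * w ^ (j - i)" using e c h2 gji K[OF gji] unfolding pchar_def by simp
    then show ?thesis using ij by (simp add: power_add[symmetric] mult.assoc)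
  qed
  have wd: "\<chi> h1 * w ^ i = \<chi> h2 * w ^ j"
    if "h1 \<in> H" "h2 \<in> H" "h1 \<otimes> g [^] i = h2 \<otimes> g [^] j" for h1 h2 i j
    using wd1 that by (metis nat_le_linear)
  define H' where "H' = {h \<otimes> g [^] (i::nat) | h i. h \<in> H}"
  define \<chi>' where "\<chi>' x = (\<chi> (fst (SOME p. fst p \<in> H \<and> x = fst p \<otimes> g [^] (snd p::nat))) *
      w ^ snd (SOME p. fst p \<in> H \<and> x = fst p \<otimes> g [^] (snd p::nat)))" for x
  have rep: "\<chi>' (h \<otimes> g [^] i) = \<chi> h * w ^ i" if h: "h \<in> H" for h i
  proof -
    let ?P = "\<lambda>p. fst p \<in> H \<and> h \<otimes> g [^] i = fst p \<otimes> g [^] (snd p::nat)"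
    define p where "p = (SOME p. ?P p)"
    have "?P (h, i)" using h by simp
    then have Pp: "?P p" unfolding p_def by (rule someI)
    have "\<chi>' (h \<otimes> g [^] i) = \<chi> (fst p) * w ^ snd p" unfolding \<chi>'_def p_def by simp
    also have "\<dots> = \<chi> h * w ^ i" using wd[of "fst p" h "snd p" i] Pp h by simp
    finally show ?thesis .
  qed
  have H'c: "H' \<subseteq> carrier G"
  proof
    fix x assume "x \<in> H'"
    then obtain h i where x: "x = h \<otimes> g [^] (i::nat)" "h \<in> H" unfolding H'_def by auto
    then have "h \<in> carrier G" using Hc by blast
    then show "x \<in> carrier G" using x g by simp
  qed
  have mulH': "h1 \<otimes> g [^] (i::nat) \<otimes> (h2 \<otimes> g [^] (j::nat)) = (h1 \<otimes> h2) \<otimes> g [^] (i + j)"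
    if "h1 \<in> H" "h2 \<in> H" for h1 h2 i j
  proof -
    have c: "h1 \<in> carrier G" "h2 \<in> carrier G" using that Hc by auto
    have "g [^] (i + j) = g [^] i \<otimes> g [^] j" using g by (simp add: nat_pow_mult)
    then show ?thesis using c g by (simp add: m_ac)
  qed
  have sH': "subm H'" unfolding subm_def
  proof (intro conjI ballI)
    show "H' \<subseteq> carrier G" by (fact H'c)
    have "\<one> = \<one> \<otimes> g [^] (0::nat)" by simp
    then show "\<one> \<in> H'" unfolding H'_def using H unfolding subm_def by blast
    fix x y assume "x \<in> H'" "y \<in> H'"
    then obtain h1 i h2 j where x: "x = h1 \<otimes> g [^] (i::nat)" "h1 \<in> H" and y: "y = h2 \<otimes> g [^] (j::nat)" "h2 \<in> H"
      unfolding H'_def by auto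
    have "x \<otimes> y = (h1 \<otimes> h2) \<otimes> g [^] (i + j)" using x y mulH' by simp
    moreover have "h1 \<otimes> h2 \<in> H" using H x y by (simp add: subm_def)
    ultimately show "x \<otimes> y \<in> H'" unfolding H'_def by blast
  qed
  have pH': "pchar H' \<chi>'" unfolding pchar_def
  proof (intro conjI ballI)
    fix x assume "x \<in> H'"
    then obtain h i where x: "x = h \<otimes> g [^] (i::nat)" "h \<in> H" unfolding H'_def by auto
    show "cmod (\<chi>' x) = 1" using x rep c w by (simp add: pchar_def norm_mult norm_power)
  next
    fix x y assume "x \<in> H'" "y \<in> H'"
    then obtain h1 i h2 j where x: "x = h1 \<otimes> g [^] (i::nat)" "h1 \<in> H" and y: "y = h2 \<otimes> g [^] (j::nat)" "h2 \<in> H"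
      unfolding H'_def by auto
    have "x \<otimes> y = (h1 \<otimes> h2) \<otimes> g [^] (i + j)" using x y mulH' by simp
    moreover have "h1 \<otimes> h2 \<in> H" using H x y by (simp add: subm_def)
    ultimately have "\<chi>' (x \<otimes> y) = \<chi> (h1 \<otimes> h2) * w ^ (i + j)" using rep by simp
    also have "\<dots> = \<chi>' x * \<chi>' y" using rep x y c by (simp add: pchar_def power_add)
    finally show "\<chi>' (x \<otimes> y) = \<chi>' x * \<chi>' y" .
  qed
  have hH: "h = h \<otimes> g [^] (0::nat)" if "h \<in> H" for h using that Hc by auto
  have "H \<subseteq> H'" unfolding H'_def using hH by blast
  moreover have "g = \<one> \<otimes> g [^] (1::nat)" using g by simp
  then have "g \<in> H'" unfolding H'_def using H unfolding subm_def by blast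
  moreover have "\<forall>h\<in>H. \<chi>' h = \<chi> h" using rep[of _ 0] hH by (metis mult_1_right power_0)
  moreover have "\<chi>' g = w" using rep[of \<one> 1] H c pchar_one[OF H c] g by (simp add: subm_def)
  ultimately show ?thesis using sH' pH' by blast
qed

lemma least_pow:
  assumes g: "g \<in> carrier G" and H: "subm H"
  obtains n :: nat where "0 < n" "g [^] n \<in> H" "\<And>m. 0 < m \<Longrightarrow> m < n \<Longrightarrow> g [^] m \<notin> H"
proof -
  have ex: "0 < order G \<and> g [^] order G \<in> H" using order_pos pow_order_eq_1[OF g] H by (simp add: subm_def)
  define n where "n = (LEAST n::nat. 0 < n \<and> g [^] n \<in> H)"
  have "0 < n \<and> g [^] n \<in> H" unfolding n_def by (rule LeastI[of _ "order G"]) (fact ex)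
  moreover have "g [^] m \<notin> H" if "0 < m" "m < n" for m
    using not_less_Least[of m "\<lambda>n. 0 < n \<and> g [^] n \<in> H"] that unfolding n_def by blast
  ultimately show ?thesis using that by blast
qed

lemma extend:
  assumes "subm H" "pchar H \<chi>"
  shows "\<exists>\<gamma>\<in>characters G. \<forall>h\<in>H. \<gamma> h = \<chi> h"
  using assms
proof (induction "card (carrier G - H)" arbitrary: H \<chi> rule: less_induct)
  case less
  show ?case
  proof (cases "carrier G \<subseteq> H")
    case True
    have "restrict \<chi> (carrier G) \<in> characters G" unfolding characters_def
    proof (intro CollectI conjI ballI)
      show "restrict \<chi> (carrier G) \<in> extensional (carrier G)" by simp
      fix x assume x: "x \<in> carrier G"
      then have "x \<in> H" using True by blast
      then show "cmod (restrict \<chi> (carrier G) x) = 1" using less.prems(2) x unfolding pchar_def by simp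
    next
      fix x y assume x: "x \<in> carrier G" and y: "y \<in> carrier G"
      then have "x \<in> H" "y \<in> H" using True by blast+
      then show "restrict \<chi> (carrier G) (x \<otimes> y) = restrict \<chi> (carrier G) x * restrict \<chi> (carrier G) y"
        using less.prems(2) x y unfolding pchar_def by simp
    qed
    moreover have "\<forall>h\<in>H. restrict \<chi> (carrier G) h = \<chi> h"
      using less.prems unfolding subm_def by auto
    ultimately show ?thesis by blast
  next
    case False
    then obtain g where g: "g \<in> carrier G" "g \<notin> H" by blast
    obtain n :: nat where n: "0 < n" "g [^] n \<in> H" "\<And>m. 0 < m \<Longrightarrow> m < n \<Longrightarrow> g [^] m \<notin> H"
      using least_pow[OF g(1) less.prems(1)] by blast
    define z where "z = \<chi> (g [^] n)"
    have z1: "cmod z = 1" using less.prems(2) n(2) unfolding z_def pchar_def by simp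
    then have zn: "z \<noteq> 0" by auto
    define w where "w = cis (Arg z / real n)"
    have w1: "cmod w = 1" unfolding w_def by simp
    have "w ^ n = cis (Arg z)" unfolding w_def DeMoivre using n(1) by simp
    also have "\<dots> = z" using cis_Arg[OF zn] z1 by (simp add: sgn_div_norm)
    finally have wn: "w ^ n = \<chi> (g [^] n)" unfolding z_def .
    obtain H' \<chi>' where st: "subm H'" "pchar H' \<chi>'" "H \<subseteq> H'" "g \<in> H'" "\<forall>h\<in>H. \<chi>' h = \<chi> h"
      using ext_step[OF less.prems g(1) n w1 wn] by blast
    have "carrier G - H' \<subset> carrier G - H" using st(3,4) g by blast
    then have "card (carrier G - H') < card (carrier G - H)"
      using fin by (simp add: psubset_card_mono)
    then obtain \<gamma> where "\<gamma> \<in> characters G" "\<forall>h\<in>H'. \<gamma> h = \<chi>' h"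
      using less.hyps[OF _ st(1,2)] by blast
    then show ?thesis using st(3,5) by (metis subsetD)
  qed
qed

lemma separate:
  assumes y: "y \<in> carrier G" "y \<noteq> \<one>"
  shows "\<exists>\<gamma>\<in>characters G. \<gamma> y \<noteq> 1"
proof -
  have H: "subm {\<one>}" by (simp add: subm_def)
  have c: "pchar {\<one>} (\<lambda>_. 1)" by (simp add: pchar_def)
  obtain n :: nat where n: "0 < n" "y [^] n \<in> {\<one>}" "\<And>m. 0 < m \<Longrightarrow> m < n \<Longrightarrow> y [^] m \<notin> {\<one>}"
    using least_pow[OF y(1) H] by blast
  have n2: "n \<ge> 2"
  proof (rule ccontr)
    assume "\<not> n \<ge> 2"
    then have "n = 1" using n(1) by simp
    then show False using n(2) y by simp
  qed
  define w where "w = cis (2 * pi / real n)"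
  have w1: "cmod w = 1" unfolding w_def by simp
  have wn: "w ^ n = (\<lambda>_. 1) (y [^] n)" unfolding w_def DeMoivre using n(1) by simp
  have wne: "w \<noteq> 1"
  proof
    assume "w = 1"
    then have "cos (2 * pi / real n) = 1" unfolding w_def by (metis Re_complex_of_real cis.sel(1) one_complex.sel(1))
    then obtain k :: int where k: "2 * pi / real n = real_of_int k * 2 * pi" using cos_one_2pi_int by blast
    have "1 / real n = (2 * pi / real n) / (2 * pi)" by simp
    also have "\<dots> = (real_of_int k * 2 * pi) / (2 * pi)" using k by simp
    also have "\<dots> = real_of_int k" by simp
    finally have "1 / real n = real_of_int k" .
    moreover have "0 < 1 / real n" "1 / real n < 1" using n2 by auto
    ultimately have "0 < k" "k < 1" by simp_all
    then show False by simp
  qed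
  obtain H' \<chi>' where st: "subm H'" "pchar H' \<chi>'" "y \<in> H'" "\<chi>' y = w"
    using ext_step[OF H c y(1) n w1 wn] by blast
  obtain \<gamma> where "\<gamma> \<in> characters G" "\<forall>h\<in>H'. \<gamma> h = \<chi>' h" using extend[OF st(1,2)] by blast
  then have "\<gamma> y = w" using st(3,4) by simp
  then show ?thesis using wne \<open>\<gamma> \<in> characters G\<close> by blast
qed

abbreviation "Gh \<equiv> characters G"

lemma cmul_cconj: "\<delta> \<in> Gh \<Longrightarrow> \<gamma> \<in> Gh \<Longrightarrow> cmul (cconj \<delta>) (cmul \<delta> \<gamma>) = \<gamma>"
proof -
  assume d: "\<delta> \<in> Gh" and g: "\<gamma> \<in> Gh"
  show ?thesis
  proof (rule char_ext[OF cmul_char[OF cconj_char[OF d] cmul_char[OF d g]] g])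
    fix x assume x: "x \<in> carrier G"
    have "cnj (\<delta> x) * \<delta> x = 1" using cnj_unit[OF char_norm[OF d x]] by (simp add: mult.commute)
    then show "cmul (cconj \<delta>) (cmul \<delta> \<gamma>) x = \<gamma> x" using x
      by (simp add: cmul_def cconj_def mult.assoc[symmetric])
  qed
qed

lemma cmul_cconj2: "\<delta> \<in> Gh \<Longrightarrow> \<gamma> \<in> Gh \<Longrightarrow> cmul \<delta> (cmul (cconj \<delta>) \<gamma>) = \<gamma>"
proof -
  assume d: "\<delta> \<in> Gh" and g: "\<gamma> \<in> Gh"
  show ?thesis
  proof (rule char_ext[OF cmul_char[OF d cmul_char[OF cconj_char[OF d] g]] g])
    fix x assume x: "x \<in> carrier G"
    have "\<delta> x * cnj (\<delta> x) = 1" using cnj_unit[OF char_norm[OF d x]] by simp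
    then show "cmul \<delta> (cmul (cconj \<delta>) \<gamma>) x = \<gamma> x" using x
      by (simp add: cmul_def cconj_def mult.assoc[symmetric])
  qed
qed

lemma orth1:
  assumes y: "y \<in> carrier G"
  shows "(\<Sum>\<gamma>\<in>Gh. \<gamma> y) = (if y = \<one> then of_nat (card Gh) else 0)"
proof (cases "y = \<one>")
  case True
  then show ?thesis by (simp add: char_one)
next
  case False
  obtain \<delta> where d: "\<delta> \<in> Gh" "\<delta> y \<noteq> 1" using separate[OF y False] by blast
  have bij: "bij_betw (cmul \<delta>) Gh Gh"
    by (rule bij_betw_byWitness[where f'="cmul (cconj \<delta>)"])
       (auto simp: cmul_cconj cmul_cconj2 d cmul_char cconj_char)
  have "(\<Sum>\<gamma>\<in>Gh. \<gamma> y) = (\<Sum>\<gamma>\<in>Gh. cmul \<delta> \<gamma> y)"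
    using sum.reindex_bij_betw[OF bij, of "\<lambda>\<gamma>. \<gamma> y"] by simp
  also have "\<dots> = \<delta> y * (\<Sum>\<gamma>\<in>Gh. \<gamma> y)" using y by (simp add: cmul_def sum_distrib_left)
  finally have "(\<Sum>\<gamma>\<in>Gh. \<gamma> y) = 0" using d(2)
    by (metis mult_cancel_right2 mult.commute)
  then show ?thesis using False by simp
qed

lemma orth2:
  assumes g: "\<gamma> \<in> Gh" and d: "\<delta> \<in> Gh"
  shows "(\<Sum>x\<in>carrier G. \<gamma> x * cnj (\<delta> x)) = (if \<gamma> = \<delta> then of_nat (order G) else 0)"
proof (cases "\<gamma> = \<delta>")
  case True
  then show ?thesis using cnj_unit[OF char_norm[OF g]] by (simp add: order_def)
next
  case False
  then obtain x0 where x0: "x0 \<in> carrier G" "\<gamma> x0 \<noteq> \<delta> x0" using char_ext[OF g d] by blast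
  have ne: "\<gamma> x0 * cnj (\<delta> x0) \<noteq> 1"
  proof
    assume "\<gamma> x0 * cnj (\<delta> x0) = 1"
    then have "\<gamma> x0 * cnj (\<delta> x0) * \<delta> x0 = \<delta> x0" by simp
    moreover have "cnj (\<delta> x0) * \<delta> x0 = 1" using cnj_unit[OF char_norm[OF d x0(1)]] by (simp add: mult.commute)
    ultimately show False using x0(2) by (simp add: mult.assoc)
  qed
  have "(\<Sum>x\<in>carrier G. \<gamma> x * cnj (\<delta> x)) = 0"
    by (rule sum_mult_zero[where f="\<lambda>x. \<gamma> x * cnj (\<delta> x)", OF _ x0(1) ne]) (simp add: char_mult g d)
  then show ?thesis using False by simp
qed

lemma card_chars: "card Gh = order G"
proof -
  let ?M = "card Gh" and ?N = "order G"
  have "(\<Sum>x\<in>carrier G. (\<Sum>\<gamma>\<in>Gh. \<gamma> x) * cnj (\<Sum>\<delta>\<in>Gh. \<delta> x))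
      = (\<Sum>x\<in>carrier G. if x = \<one> then of_nat ?M * of_nat ?M else 0)"
    by (rule sum.cong) (auto simp: orth1)
  also have "\<dots> = of_nat ?M * of_nat ?M" using fin by simp
  finally have e1: "(\<Sum>x\<in>carrier G. (\<Sum>\<gamma>\<in>Gh. \<gamma> x) * cnj (\<Sum>\<delta>\<in>Gh. \<delta> x)) = of_nat ?M * of_nat ?M" .
  have "(\<Sum>x\<in>carrier G. (\<Sum>\<gamma>\<in>Gh. \<gamma> x) * cnj (\<Sum>\<delta>\<in>Gh. \<delta> x))
      = (\<Sum>x\<in>carrier G. \<Sum>\<delta>\<in>Gh. \<Sum>\<gamma>\<in>Gh. \<gamma> x * cnj (\<delta> x))"
    by (simp add: sum_distrib_left sum_distrib_right)
  also have "\<dots> = (\<Sum>\<delta>\<in>Gh. \<Sum>\<gamma>\<in>Gh. \<Sum>x\<in>carrier G. \<gamma> x * cnj (\<delta> x))"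
    by (subst sum.swap, rule sum.cong[OF refl], rule sum.swap)
  also have "\<dots> = (\<Sum>\<delta>\<in>Gh. \<Sum>\<gamma>\<in>Gh. if \<gamma> = \<delta> then of_nat ?N else 0)"
    by (rule sum.cong[OF refl], rule sum.cong[OF refl]) (simp add: orth2)
  also have "\<dots> = of_nat ?M * of_nat ?N" using finite_characters by simp
  finally have e2: "(\<Sum>x\<in>carrier G. (\<Sum>\<gamma>\<in>Gh. \<gamma> x) * cnj (\<Sum>\<delta>\<in>Gh. \<delta> x)) = of_nat ?M * of_nat ?N" .
  have "(of_nat ?M * of_nat ?M :: complex) = of_nat ?M * of_nat ?N" by (rule trans[OF e1[symmetric] e2])
  then have "(of_nat (?M * ?M) :: complex) = of_nat (?M * ?N)" unfolding of_nat_mult .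
  then have "?M * ?M = ?M * ?N" by (simp only: of_nat_eq_iff)
  moreover have "?M > 0" using finite_characters triv_char card_gt_0_iff by blast
  ultimately show ?thesis by simp
qed

definition ft :: "'a set \<Rightarrow> ('a \<Rightarrow> complex) \<Rightarrow> complex" where
  "ft A \<gamma> = (\<Sum>a\<in>A. \<gamma> a)"

lemma inv_eq_one_iff: "a \<in> carrier G \<Longrightarrow> b \<in> carrier G \<Longrightarrow> (a \<otimes> inv b = \<one>) = (a = b)"
  by (metis inv_closed inv_equality inv_inv r_inv)

lemma parseval:
  assumes A: "A \<subseteq> carrier G"
  shows "(\<Sum>\<gamma>\<in>Gh. (cmod (ft A \<gamma>))\<^sup>2) = real (card Gh) * real (card A)"
proof -
  have fA: "finite A" using A fin finite_subset by blast
  have "complex_of_real (\<Sum>\<gamma>\<in>Gh. (cmod (ft A \<gamma>))\<^sup>2) = (\<Sum>\<gamma>\<in>Gh. ft A \<gamma> * cnj (ft A \<gamma>))"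
    by (simp only: of_real_sum complex_norm_square)
  also have "\<dots> = (\<Sum>\<gamma>\<in>Gh. \<Sum>b\<in>A. \<Sum>a\<in>A. \<gamma> (a \<otimes> inv b))"
  proof (rule sum.cong[OF refl])
    fix \<gamma> assume g: "\<gamma> \<in> Gh"
    have "ft A \<gamma> * cnj (ft A \<gamma>) = (\<Sum>b\<in>A. \<Sum>a\<in>A. \<gamma> a * cnj (\<gamma> b))"
      unfolding ft_def by (simp add: sum_distrib_left sum_distrib_right)
    also have "\<dots> = (\<Sum>b\<in>A. \<Sum>a\<in>A. \<gamma> (a \<otimes> inv b))"
    proof (intro sum.cong refl)
      fix b a assume "b \<in> A" "a \<in> A"
      then have "a \<in> carrier G" "b \<in> carrier G" using A by auto
      then show "\<gamma> a * cnj (\<gamma> b) = \<gamma> (a \<otimes> inv b)" by (simp add: char_mult[OF g] char_inv[OF g])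
    qed
    finally show "ft A \<gamma> * cnj (ft A \<gamma>) = (\<Sum>b\<in>A. \<Sum>a\<in>A. \<gamma> (a \<otimes> inv b))" .
  qed
  also have "\<dots> = (\<Sum>b\<in>A. \<Sum>\<gamma>\<in>Gh. \<Sum>a\<in>A. \<gamma> (a \<otimes> inv b))"
    by (rule sum.swap)
  also have "\<dots> = (\<Sum>b\<in>A. \<Sum>a\<in>A. \<Sum>\<gamma>\<in>Gh. \<gamma> (a \<otimes> inv b))"
    by (rule sum.cong[OF refl], rule sum.swap)
  also have "\<dots> = (\<Sum>b\<in>A. \<Sum>a\<in>A. if a = b then of_nat (card Gh) else 0)"
  proof (intro sum.cong refl)
    fix a b assume "b \<in> A" "a \<in> A"
    then have ab: "a \<in> carrier G" "b \<in> carrier G" using A by auto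
    show "(\<Sum>\<gamma>\<in>Gh. \<gamma> (a \<otimes> inv b)) = (if a = b then of_nat (card Gh) else 0)"
      using orth1[of "a \<otimes> inv b"] ab inv_eq_one_iff[OF ab] by simp
  qed
  also have "\<dots> = of_nat (card Gh) * of_nat (card A)" using fA by simp
  also have "\<dots> = complex_of_real (real (card Gh) * real (card A))" by simp
  finally show ?thesis by (rule of_real_eq_iff[THEN iffD1])
qed

lemma ksum_sub: "A \<subseteq> carrier G \<Longrightarrow> ksum G k A \<subseteq> carrier G"
proof (induction k)
  case 0 then show ?case by simp
next
  case (Suc k) then show ?case by auto
qed

lemma wrep:
  assumes A: "A \<subseteq> carrier G"
  shows "\<exists>w::'a \<Rightarrow> complex. (\<forall>y. w y \<noteq> 0 \<longrightarrow> y \<in> ksum G k A) \<and>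
           (\<forall>\<gamma>\<in>Gh. ft A \<gamma> ^ k = (\<Sum>y\<in>carrier G. w y * \<gamma> y))"
proof (induction k)
  case 0
  define w :: "'a \<Rightarrow> complex" where "w y = (if y = \<one> then 1 else 0)" for y
  have "(\<forall>y. w y \<noteq> 0 \<longrightarrow> y \<in> ksum G 0 A)" by (simp add: w_def)
  moreover have "ft A \<gamma> ^ 0 = (\<Sum>y\<in>carrier G. w y * \<gamma> y)" if "\<gamma> \<in> Gh" for \<gamma>
  proof -
    have "(\<Sum>y\<in>carrier G. w y * \<gamma> y) = (\<Sum>y\<in>carrier G. if y = \<one> then \<gamma> y else 0)"
      by (rule sum.cong) (auto simp: w_def)
    also have "\<dots> = 1" using fin char_one[OF that] by simp
    finally show ?thesis by simp
  qed
  ultimately show ?case by blast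
next
  case (Suc k)
  then obtain w where w1: "\<forall>y. w y \<noteq> 0 \<longrightarrow> y \<in> ksum G k A"
    and w2: "\<forall>\<gamma>\<in>Gh. ft A \<gamma> ^ k = (\<Sum>y\<in>carrier G. w y * \<gamma> y)" by blast
  define w' where "w' z = (if z \<in> carrier G then (\<Sum>a\<in>A. w (inv a \<otimes> z)) else 0)" for z
  have "w' z \<noteq> 0 \<longrightarrow> z \<in> ksum G (Suc k) A" for z
  proof
    assume "w' z \<noteq> 0"
    then have z: "z \<in> carrier G" and "(\<Sum>a\<in>A. w (inv a \<otimes> z)) \<noteq> 0" unfolding w'_def by (auto split: if_splits)
    then obtain a where a: "a \<in> A" "w (inv a \<otimes> z) \<noteq> 0" by (meson sum.neutral)
    then have s: "inv a \<otimes> z \<in> ksum G k A" using w1 by blast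
    have ac: "a \<in> carrier G" using a A by auto
    have "z = a \<otimes> (inv a \<otimes> z)" using ac z by (simp add: m_assoc[symmetric])
    then show "z \<in> ksum G (Suc k) A" using a s by auto
  qed
  moreover have "ft A \<gamma> ^ Suc k = (\<Sum>z\<in>carrier G. w' z * \<gamma> z)" if g: "\<gamma> \<in> Gh" for \<gamma>
  proof -
    have "ft A \<gamma> ^ Suc k = (\<Sum>a\<in>A. \<gamma> a) * (\<Sum>y\<in>carrier G. w y * \<gamma> y)"
      using w2 g by (simp add: ft_def)
    also have "\<dots> = (\<Sum>a\<in>A. \<Sum>y\<in>carrier G. w y * \<gamma> (a \<otimes> y))"
      unfolding sum_distrib_right
    proof (intro sum.cong refl)
      fix a assume "a \<in> A"
      then have ac: "a \<in> carrier G" using A by auto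
      show "\<gamma> a * (\<Sum>y\<in>carrier G. w y * \<gamma> y) = (\<Sum>y\<in>carrier G. w y * \<gamma> (a \<otimes> y))"
        unfolding sum_distrib_left by (intro sum.cong refl) (simp add: char_mult[OF g ac])
    qed
    also have "\<dots> = (\<Sum>a\<in>A. \<Sum>z\<in>carrier G. w (inv a \<otimes> z) * \<gamma> z)"
    proof (rule sum.cong[OF refl])
      fix a assume "a \<in> A"
      then have ac: "a \<in> carrier G" using A by auto
      have bij: "bij_betw (\<lambda>z. inv a \<otimes> z) (carrier G) (carrier G)" using ac by (simp add: lmul_bij)
      have "(\<Sum>y\<in>carrier G. w y * \<gamma> (a \<otimes> y)) = (\<Sum>z\<in>carrier G. w (inv a \<otimes> z) * \<gamma> (a \<otimes> (inv a \<otimes> z)))"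
        using sum.reindex_bij_betw[OF bij, of "\<lambda>y. w y * \<gamma> (a \<otimes> y)"] by simp
      also have "\<dots> = (\<Sum>z\<in>carrier G. w (inv a \<otimes> z) * \<gamma> z)"
        using ac by (intro sum.cong refl) (simp add: m_assoc[symmetric])
      finally show "(\<Sum>y\<in>carrier G. w y * \<gamma> (a \<otimes> y)) = (\<Sum>z\<in>carrier G. w (inv a \<otimes> z) * \<gamma> z)" .
    qed
    also have "\<dots> = (\<Sum>z\<in>carrier G. \<Sum>a\<in>A. w (inv a \<otimes> z) * \<gamma> z)" by (rule sum.swap)
    also have "\<dots> = (\<Sum>z\<in>carrier G. w' z * \<gamma> z)"
      by (intro sum.cong refl) (simp add: w'_def sum_distrib_right)
    finally show ?thesis .
  qed
  ultimately show ?case by blast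
qed

lemma vanish:
  assumes A: "A \<subseteq> carrier G" and x: "x \<in> carrier G" and nx: "x \<notin> kdiff G k A"
  shows "(\<Sum>\<gamma>\<in>Gh. ft A \<gamma> ^ k * cnj (ft A \<gamma>) ^ k * cnj (\<gamma> x)) = 0"
proof -
  obtain w where w1: "\<forall>y. w y \<noteq> 0 \<longrightarrow> y \<in> ksum G k A"
    and w2: "\<forall>\<gamma>\<in>Gh. ft A \<gamma> ^ k = (\<Sum>y\<in>carrier G. w y * \<gamma> y)" using wrep[OF A] by blast
  have "(\<Sum>\<gamma>\<in>Gh. ft A \<gamma> ^ k * cnj (ft A \<gamma>) ^ k * cnj (\<gamma> x))
      = (\<Sum>\<gamma>\<in>Gh. \<Sum>z\<in>carrier G. \<Sum>y\<in>carrier G. w y * cnj (w z) * \<gamma> (y \<otimes> inv z \<otimes> inv x))"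
  proof (rule sum.cong[OF refl])
    fix \<gamma> assume g: "\<gamma> \<in> Gh"
    have "ft A \<gamma> ^ k * cnj (ft A \<gamma>) ^ k * cnj (\<gamma> x)
        = (\<Sum>y\<in>carrier G. w y * \<gamma> y) * cnj (\<Sum>z\<in>carrier G. w z * \<gamma> z) * cnj (\<gamma> x)"
      using w2 g by (simp del: complex_cnj_power add: complex_cnj_power[symmetric])
    also have "\<dots> = (\<Sum>z\<in>carrier G. \<Sum>y\<in>carrier G. w y * cnj (w z) * (\<gamma> y * cnj (\<gamma> z) * cnj (\<gamma> x)))"
      by (simp add: sum_distrib_left sum_distrib_right mult_ac)
    also have "\<dots> = (\<Sum>z\<in>carrier G. \<Sum>y\<in>carrier G. w y * cnj (w z) * \<gamma> (y \<otimes> inv z \<otimes> inv x))"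
      using x by (intro sum.cong refl) (simp add: char_mult[OF g] char_inv[OF g])
    finally show "ft A \<gamma> ^ k * cnj (ft A \<gamma>) ^ k * cnj (\<gamma> x)
        = (\<Sum>z\<in>carrier G. \<Sum>y\<in>carrier G. w y * cnj (w z) * \<gamma> (y \<otimes> inv z \<otimes> inv x))" .
  qed
  also have "\<dots> = (\<Sum>z\<in>carrier G. \<Sum>\<gamma>\<in>Gh. \<Sum>y\<in>carrier G. w y * cnj (w z) * \<gamma> (y \<otimes> inv z \<otimes> inv x))"
    by (rule sum.swap)
  also have "\<dots> = (\<Sum>z\<in>carrier G. \<Sum>y\<in>carrier G. \<Sum>\<gamma>\<in>Gh. w y * cnj (w z) * \<gamma> (y \<otimes> inv z \<otimes> inv x))"
    by (rule sum.cong[OF refl], rule sum.swap)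
  also have "\<dots> = (\<Sum>z\<in>carrier G. \<Sum>y\<in>carrier G. (0::complex))"
  proof (intro sum.cong refl)
    fix z y assume z: "z \<in> carrier G" and y: "y \<in> carrier G"
    have "(\<Sum>\<gamma>\<in>Gh. w y * cnj (w z) * \<gamma> (y \<otimes> inv z \<otimes> inv x)) = w y * cnj (w z) * (\<Sum>\<gamma>\<in>Gh. \<gamma> (y \<otimes> inv z \<otimes> inv x))"
      by (simp add: sum_distrib_left)
    also have "\<dots> = 0"
    proof (cases "w y = 0 \<or> w z = 0")
      case True then show ?thesis by auto
    next
      case False
      then have "y \<in> ksum G k A" "z \<in> ksum G k A" using w1 by auto
      then have "y \<otimes> inv z \<in> kdiff G k A" unfolding kdiff_def by blast
      then have "y \<otimes> inv z \<noteq> x" using nx by blast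
      then have "y \<otimes> inv z \<otimes> inv x \<noteq> \<one>" using inv_eq_one_iff[of "y \<otimes> inv z" x] x y z by simp
      then show ?thesis using orth1[of "y \<otimes> inv z \<otimes> inv x"] x y z by simp
    qed
    finally show "(\<Sum>\<gamma>\<in>Gh. w y * cnj (w z) * \<gamma> (y \<otimes> inv z \<otimes> inv x)) = 0" .
  qed
  also have "\<dots> = 0" by simp
  finally show ?thesis .
qed

definition dissoc :: "('a \<Rightarrow> complex) set \<Rightarrow> bool" where
  "dissoc L \<longleftrightarrow> L \<subseteq> Gh \<and> (\<forall>\<epsilon>::('a \<Rightarrow> complex) \<Rightarrow> int. (\<forall>l\<in>L. \<epsilon> l \<in> {-1,0,1}) \<and>
      (\<forall>x\<in>carrier G. (\<Prod>l\<in>L. cpw (l x) (\<epsilon> l)) = 1) \<longrightarrow> (\<forall>l\<in>L. \<epsilon> l = 0))"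

lemma cpw_mult: "\<gamma> \<in> Gh \<Longrightarrow> x \<in> carrier G \<Longrightarrow> y \<in> carrier G \<Longrightarrow> cpw (\<gamma> (x \<otimes> y)) e = cpw (\<gamma> x) e * cpw (\<gamma> y) e"
  by (simp add: cpw_def char_mult)

lemma expand:
  fixes a b :: real and c :: "('a \<Rightarrow> complex) \<Rightarrow> complex"
  assumes L: "finite L" "dissoc L" and T: "T \<subseteq> L"
  shows "\<forall>\<epsilon>. (\<forall>l\<in>L. \<epsilon> l \<in> {-1,0,1}) \<and> (\<forall>l\<in>T. \<epsilon> l = 0) \<longrightarrow>
    (\<Sum>x\<in>carrier G. (\<Prod>l\<in>L. cpw (l x) (\<epsilon> l)) * (\<Prod>l\<in>T. complex_of_real (a + b * Re (c l * l x))))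
      = (if \<forall>l\<in>L. \<epsilon> l = 0 then of_nat (order G) * of_real a ^ card T else 0)"
proof -
  have LG: "L \<subseteq> Gh" using L(2) by (simp add: dissoc_def)
  have "finite T" using T L finite_subset by blast
  then show ?thesis using T
  proof (induction T rule: finite_induct)
    case empty
    show ?case
    proof (intro allI impI)
      fix \<epsilon> :: "('a \<Rightarrow> complex) \<Rightarrow> int"
      assume e: "(\<forall>l\<in>L. \<epsilon> l \<in> {-1,0,1}) \<and> (\<forall>l\<in>{}. \<epsilon> l = 0)"
      show "(\<Sum>x\<in>carrier G. (\<Prod>l\<in>L. cpw (l x) (\<epsilon> l)) * (\<Prod>l\<in>{}. complex_of_real (a + b * Re (c l * l x))))
        = (if \<forall>l\<in>L. \<epsilon> l = 0 then of_nat (order G) * of_real a ^ card {} else 0)"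
      proof (cases "\<forall>l\<in>L. \<epsilon> l = 0")
        case True
        then have "(\<Prod>l\<in>L. cpw (l x) (\<epsilon> l)) = 1" for x by (simp add: cpw_def)
        then show ?thesis using True by (simp add: order_def)
      next
        case False
        then obtain x0 where x0: "x0 \<in> carrier G" "(\<Prod>l\<in>L. cpw (l x0) (\<epsilon> l)) \<noteq> 1"
          using L(2) e unfolding dissoc_def by blast
        have "(\<Sum>x\<in>carrier G. (\<Prod>l\<in>L. cpw (l x) (\<epsilon> l))) = 0"
        proof (rule sum_mult_zero[where f="\<lambda>x. (\<Prod>l\<in>L. cpw (l x) (\<epsilon> l))", OF _ x0])
          fix x y assume "x \<in> carrier G" "y \<in> carrier G"
          then show "(\<Prod>l\<in>L. cpw (l (x \<otimes> y)) (\<epsilon> l)) = (\<Prod>l\<in>L. cpw (l x) (\<epsilon> l)) * (\<Prod>l\<in>L. cpw (l y) (\<epsilon> l))"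
            using LG by (simp add: cpw_mult subsetD prod.distrib[symmetric])
        qed
        then show ?thesis using False by auto
      qed
    qed
  next
    case (insert \<mu> T)
    have \<mu>L: "\<mu> \<in> L" and TL: "T \<subseteq> L" using insert.prems by auto
    have IH: "\<forall>\<epsilon>. (\<forall>l\<in>L. \<epsilon> l \<in> {-1,0,1}) \<and> (\<forall>l\<in>T. \<epsilon> l = 0) \<longrightarrow>
      (\<Sum>x\<in>carrier G. (\<Prod>l\<in>L. cpw (l x) (\<epsilon> l)) * (\<Prod>l\<in>T. complex_of_real (a + b * Re (c l * l x))))
      = (if \<forall>l\<in>L. \<epsilon> l = 0 then of_nat (order G) * of_real a ^ card T else 0)" using insert.IH TL by blast
    show ?case
    proof (intro allI impI)
      fix \<epsilon> :: "('a \<Rightarrow> complex) \<Rightarrow> int"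
      assume e: "(\<forall>l\<in>L. \<epsilon> l \<in> {-1,0,1}) \<and> (\<forall>l\<in>insert \<mu> T. \<epsilon> l = 0)"
      define P where "P \<epsilon>' x = (\<Prod>l\<in>L. cpw (l x) (\<epsilon>' l))" for \<epsilon>' :: "('a \<Rightarrow> complex) \<Rightarrow> int" and x
      define F where "F x = (\<Prod>l\<in>T. complex_of_real (a + b * Re (c l * l x)))" for x
      define B where "B = complex_of_real (b / 2) * c \<mu>"
      define B' where "B' = complex_of_real (b / 2) * cnj (c \<mu>)"
      have e\<mu>: "\<epsilon> \<mu> = 0" using e by simp
      have Pr: "P \<epsilon>' x = cpw (\<mu> x) (\<epsilon>' \<mu>) * (\<Prod>l\<in>L - {\<mu>}. cpw (l x) (\<epsilon>' l))" for \<epsilon>' x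
        unfolding P_def using prod.remove[OF L(1) \<mu>L] by blast
      have P1: "P (\<epsilon>(\<mu> := 1)) x = \<mu> x * P \<epsilon> x" for x
      proof -
        have "(\<Prod>l\<in>L - {\<mu>}. cpw (l x) ((\<epsilon>(\<mu> := 1)) l)) = (\<Prod>l\<in>L - {\<mu>}. cpw (l x) (\<epsilon> l))"
          by (rule prod.cong) auto
        then show ?thesis using Pr[of "\<epsilon>(\<mu> := 1)" x] Pr[of \<epsilon> x] e\<mu> by (simp add: cpw_def)
      qed
      have P2: "P (\<epsilon>(\<mu> := -1)) x = cnj (\<mu> x) * P \<epsilon> x" for x
      proof -
        have "(\<Prod>l\<in>L - {\<mu>}. cpw (l x) ((\<epsilon>(\<mu> := -1)) l)) = (\<Prod>l\<in>L - {\<mu>}. cpw (l x) (\<epsilon> l))"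
          by (rule prod.cong) auto
        then show ?thesis using Pr[of "\<epsilon>(\<mu> := -1)" x] Pr[of \<epsilon> x] e\<mu> by (simp add: cpw_def)
      qed
      have fm: "complex_of_real (a + b * Re (c \<mu> * \<mu> x)) = of_real a + B * \<mu> x + B' * cnj (\<mu> x)" for x
      proof -
        have "complex_of_real (Re (c \<mu> * \<mu> x)) = (c \<mu> * \<mu> x + cnj (c \<mu> * \<mu> x)) / 2"
          using complex_add_cnj[of "c \<mu> * \<mu> x"] by simp
        then show ?thesis unfolding B_def B'_def by (simp add: field_simps)
      qed
      have "(\<Sum>x\<in>carrier G. P \<epsilon> x * (\<Prod>l\<in>insert \<mu> T. complex_of_real (a + b * Re (c l * l x))))
          = (\<Sum>x\<in>carrier G. of_real a * (P \<epsilon> x * F x) + B * (P (\<epsilon>(\<mu> := 1)) x * F x) + B' * (P (\<epsilon>(\<mu> := -1)) x * F x))"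
      proof (rule sum.cong[OF refl])
        fix x
        show "P \<epsilon> x * (\<Prod>l\<in>insert \<mu> T. complex_of_real (a + b * Re (c l * l x)))
          = of_real a * (P \<epsilon> x * F x) + B * (P (\<epsilon>(\<mu> := 1)) x * F x) + B' * (P (\<epsilon>(\<mu> := -1)) x * F x)"
        proof -
          have pi: "(\<Prod>l\<in>insert \<mu> T. complex_of_real (a + b * Re (c l * l x))) = complex_of_real (a + b * Re (c \<mu> * \<mu> x)) * F x"
            unfolding F_def by (rule prod.insert[OF insert.hyps(1,2)])
          show ?thesis unfolding pi fm P1 P2 by (simp add: algebra_simps)
        qed
      qed
      also have "\<dots> = of_real a * (\<Sum>x\<in>carrier G. P \<epsilon> x * F x) + B * (\<Sum>x\<in>carrier G. P (\<epsilon>(\<mu> := 1)) x * F x)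
          + B' * (\<Sum>x\<in>carrier G. P (\<epsilon>(\<mu> := -1)) x * F x)"
        by (simp add: sum.distrib sum_distrib_left)
      also have "(\<Sum>x\<in>carrier G. P (\<epsilon>(\<mu> := 1)) x * F x) = 0"
      proof -
        have "(\<forall>l\<in>L. (\<epsilon>(\<mu> := 1)) l \<in> {-1,0,1}) \<and> (\<forall>l\<in>T. (\<epsilon>(\<mu> := 1)) l = 0)"
          using e insert.hyps by auto
        moreover have "\<not> (\<forall>l\<in>L. (\<epsilon>(\<mu> := 1)) l = 0)" using \<mu>L by auto
        ultimately have c1: "(\<forall>l\<in>L. (\<epsilon>(\<mu> := 1)) l \<in> {-1,0,1}) \<and> (\<forall>l\<in>T. (\<epsilon>(\<mu> := 1)) l = 0)"
          and c2: "\<not> (\<forall>l\<in>L. (\<epsilon>(\<mu> := 1)) l = 0)" by blast+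
        have "(\<Sum>x\<in>carrier G. P (\<epsilon>(\<mu> := 1)) x * F x) = (if \<forall>l\<in>L. (\<epsilon>(\<mu> := 1)) l = 0 then of_nat (order G) * of_real a ^ card T else 0)"
          unfolding P_def F_def by (rule IH[rule_format, OF c1])
        then show ?thesis by (simp only: if_not_P[OF c2])
      qed
      also have "(\<Sum>x\<in>carrier G. P (\<epsilon>(\<mu> := -1)) x * F x) = 0"
      proof -
        have "(\<forall>l\<in>L. (\<epsilon>(\<mu> := -1)) l \<in> {-1,0,1}) \<and> (\<forall>l\<in>T. (\<epsilon>(\<mu> := -1)) l = 0)"
          using e insert.hyps by auto
        moreover have "\<not> (\<forall>l\<in>L. (\<epsilon>(\<mu> := -1)) l = 0)" using \<mu>L by auto
        ultimately have c1: "(\<forall>l\<in>L. (\<epsilon>(\<mu> := -1)) l \<in> {-1,0,1}) \<and> (\<forall>l\<in>T. (\<epsilon>(\<mu> := -1)) l = 0)"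
          and c2: "\<not> (\<forall>l\<in>L. (\<epsilon>(\<mu> := -1)) l = 0)" by blast+
        have "(\<Sum>x\<in>carrier G. P (\<epsilon>(\<mu> := -1)) x * F x) = (if \<forall>l\<in>L. (\<epsilon>(\<mu> := -1)) l = 0 then of_nat (order G) * of_real a ^ card T else 0)"
          unfolding P_def F_def by (rule IH[rule_format, OF c1])
        then show ?thesis by (simp only: if_not_P[OF c2])
      qed
      also have "(\<Sum>x\<in>carrier G. P \<epsilon> x * F x) = (if \<forall>l\<in>L. \<epsilon> l = 0 then of_nat (order G) * of_real a ^ card T else 0)"
      proof -
        have c1: "(\<forall>l\<in>L. \<epsilon> l \<in> {-1,0,1}) \<and> (\<forall>l\<in>T. \<epsilon> l = 0)" using e by simp
        show ?thesis unfolding P_def F_def by (rule IH[rule_format, OF c1])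
      qed
      finally show "(\<Sum>x\<in>carrier G. (\<Prod>l\<in>L. cpw (l x) (\<epsilon> l)) * (\<Prod>l\<in>insert \<mu> T. complex_of_real (a + b * Re (c l * l x))))
        = (if \<forall>l\<in>L. \<epsilon> l = 0 then of_nat (order G) * of_real a ^ card (insert \<mu> T) else 0)"
        unfolding P_def using insert.hyps by simp
    qed
  qed
qed

lemma chang:
  assumes A: "A \<subseteq> carrier G" "A \<noteq> {}" and L: "finite L" "dissoc L"
    and spec: "\<forall>l\<in>L. real (card A) / 2 \<le> cmod (ft A l)"
  shows "real (card A) * (17/16) ^ card L \<le> real (order G)"
proof -
  have fA: "finite A" using A(1) fin finite_subset by blast
  have nA: "0 < card A" using fA A(2) card_gt_0_iff by blast
  have LG: "L \<subseteq> Gh" using L(2) by (simp add: dissoc_def)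
  define t :: real where "t = 1/4"
  define a where "a = (exp t + exp (- t)) / 2"
  define b where "b = (exp t - exp (- t)) / 2"
  define c where "c l = cnj (ft A l) / complex_of_real (cmod (ft A l))" for l
  define u where "u l x = Re (c l * l x)" for l x
  define d where "d = card L"
  define F where "F x = (\<Sum>l\<in>L. u l x)" for x
  have ftpos: "0 < cmod (ft A l)" if "l \<in> L" for l
  proof -
    have "0 < real (card A) / 2" using nA by simp
    moreover have "real (card A) / 2 \<le> cmod (ft A l)" using spec that by blast
    ultimately show ?thesis by linarith
  qed
  have cl: "c l * ft A l = complex_of_real (cmod (ft A l))" if "l \<in> L" for l
  proof -
    define r where "r = cmod (ft A l)"
    have r: "0 < r" unfolding r_def using ftpos[OF that] .
    have "c l * ft A l = (cnj (ft A l) * ft A l) / complex_of_real r" unfolding c_def r_def by simp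
    also have "cnj (ft A l) * ft A l = complex_of_real (r\<^sup>2)"
      using complex_norm_square[of "ft A l"] unfolding r_def by (simp add: mult.commute)
    also have "complex_of_real (r\<^sup>2) / complex_of_real r = complex_of_real (r\<^sup>2 / r)" by simp
    also have "r\<^sup>2 / r = r" using r by (simp add: power2_eq_square)
    finally show ?thesis unfolding r_def .
  qed
  have c1: "cmod (c l) = 1" if "l \<in> L" for l
    unfolding c_def using ftpos[OF that] by (simp add: norm_divide)
  have ub: "\<bar>u l x\<bar> \<le> 1" if "l \<in> L" "x \<in> carrier G" for l x
  proof -
    have lG: "l \<in> Gh" using LG that(1) by blast
    have "cmod (c l * l x) = 1" using c1[OF that(1)] char_norm[OF lG that(2)] by (simp add: norm_mult)
    then show ?thesis unfolding u_def using abs_Re_le_cmod[of "c l * l x"] by simp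
  qed
  have sumF: "(\<Sum>x\<in>A. F x) = (\<Sum>l\<in>L. cmod (ft A l))"
  proof -
    have "(\<Sum>x\<in>A. F x) = (\<Sum>l\<in>L. \<Sum>x\<in>A. u l x)" unfolding F_def by (rule sum.swap)
    also have "\<dots> = (\<Sum>l\<in>L. Re (c l * ft A l))"
      unfolding u_def ft_def by (simp only: sum_distrib_left Re_sum)
    also have "\<dots> = (\<Sum>l\<in>L. cmod (ft A l))" by (rule sum.cong) (simp_all add: cl)
    finally show ?thesis .
  qed
  have sumF2: "real d * real (card A) / 2 \<le> (\<Sum>x\<in>A. F x)"
  proof -
    have "(\<Sum>l\<in>L. real (card A) / 2) \<le> (\<Sum>l\<in>L. cmod (ft A l))" using spec by (intro sum_mono) blast
    then show ?thesis using sumF unfolding d_def by simp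
  qed
  define m where "m = t * real d / 2"
  have low: "real (card A) * exp m \<le> (\<Sum>x\<in>A. exp (t * F x))"
  proof -
    have pt: "exp m * (1 + (t * F x - m)) \<le> exp (t * F x)" for x
    proof -
      have "exp m * (1 + (t * F x - m)) \<le> exp m * exp (t * F x - m)"
        by (intro mult_left_mono exp_ge_add_one_self) simp
      also have "\<dots> = exp (t * F x)" by (simp add: exp_diff)
      finally show ?thesis .
    qed
    have pw: "exp m * (1 + (t * F x - m)) = exp m * (1 - m) + (exp m * t) * F x" for x
      by (simp add: algebra_simps)
    have "(\<Sum>x\<in>A. exp m * (1 + (t * F x - m))) = (\<Sum>x\<in>A. exp m * (1 - m) + (exp m * t) * F x)"
      unfolding pw ..
    also have "\<dots> = real (card A) * (exp m * (1 - m)) + (exp m * t) * (\<Sum>x\<in>A. F x)"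
      by (simp add: sum.distrib sum_distrib_left)
    also have "\<dots> = exp m * (real (card A) * (1 - m) + t * (\<Sum>x\<in>A. F x))"
      by (simp add: algebra_simps)
    also have "\<dots> \<ge> exp m * real (card A)"
    proof -
      have h1: "t * (\<Sum>x\<in>A. F x) \<ge> t * (real d * real (card A) / 2)" using sumF2 unfolding t_def by simp
      have h2: "real (card A) * m = t * (real d * real (card A) / 2)" unfolding m_def by (simp add: algebra_simps)
      have h3: "real (card A) * (1 - m) = real (card A) - real (card A) * m" by (simp add: right_diff_distrib)
      have "real (card A) * (1 - m) + t * (\<Sum>x\<in>A. F x) \<ge> real (card A)" using h1 h2 h3 by linarith
      then show ?thesis by simp
    qed
    finally have "exp m * real (card A) \<le> (\<Sum>x\<in>A. exp m * (1 + (t * F x - m)))" .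
    also have "\<dots> \<le> (\<Sum>x\<in>A. exp (t * F x))" by (intro sum_mono pt)
    finally show ?thesis by (simp add: mult.commute)
  qed
  have up1: "(\<Sum>x\<in>A. exp (t * F x)) \<le> (\<Sum>x\<in>carrier G. exp (t * F x))"
    by (rule sum_mono2[OF fin A(1)]) simp
  have up2: "(\<Sum>x\<in>carrier G. exp (t * F x)) \<le> (\<Sum>x\<in>carrier G. \<Prod>l\<in>L. (a + b * u l x))"
  proof (rule sum_mono)
    fix x assume x: "x \<in> carrier G"
    have "exp (t * F x) = (\<Prod>l\<in>L. exp (t * u l x))"
      unfolding F_def sum_distrib_left using exp_sum[OF L(1)] by simp
    also have "\<dots> \<le> (\<Prod>l\<in>L. (a + b * u l x))"
    proof (rule prod_mono)
      fix l assume "l \<in> L"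
      show "0 \<le> exp (t * u l x) \<and> exp (t * u l x) \<le> a + b * u l x"
        using chord_exp[OF ub[OF \<open>l \<in> L\<close> x], of t] unfolding a_def b_def by simp
    qed
    finally show "exp (t * F x) \<le> (\<Prod>l\<in>L. (a + b * u l x))" .
  qed
  have up3: "(\<Sum>x\<in>carrier G. \<Prod>l\<in>L. (a + b * u l x)) = real (order G) * a ^ d"
  proof -
    have e0: "(\<forall>l\<in>L. (\<lambda>_. 0::int) l \<in> {-1,0,1}) \<and> (\<forall>l\<in>L. (\<lambda>_. 0::int) l = 0)" by simp
    have ex: "(\<Sum>x\<in>carrier G. (\<Prod>l\<in>L. cpw (l x) ((\<lambda>_. 0::int) l)) * (\<Prod>l\<in>L. complex_of_real (a + b * Re (c l * l x))))
      = (if \<forall>l\<in>L. (\<lambda>_. 0::int) l = 0 then of_nat (order G) * of_real a ^ card L else 0)"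
      by (rule expand[OF L order.refl, rule_format, OF e0])
    have "complex_of_real (\<Sum>x\<in>carrier G. \<Prod>l\<in>L. (a + b * u l x))
        = (\<Sum>x\<in>carrier G. (\<Prod>l\<in>L. cpw (l x) ((\<lambda>_. 0::int) l)) * (\<Prod>l\<in>L. complex_of_real (a + b * Re (c l * l x))))"
      unfolding u_def by (simp add: cpw_def)
    also have "\<dots> = complex_of_real (real (order G) * a ^ d)" unfolding ex d_def by simp
    finally show ?thesis by (rule of_real_eq_iff[THEN iffD1])
  qed
  have main: "real (card A) * exp m \<le> real (order G) * a ^ d"
    using low up1 up2 up3 by linarith
  have em: "exp m = exp (1/8) ^ d" unfolding m_def t_def by (simp add: exp_of_nat_mult[symmetric] field_simps)
  have "(9/8::real) ^ d \<le> exp (1/8) ^ d" by (rule power_mono[OF exp_eighth]) simp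
  then have m2: "(9/8::real) ^ d \<le> exp m" using em by simp
  have apos: "0 < a" unfolding a_def by (simp add: add_pos_pos)
  have ab: "a \<le> 169/160" using cosh_quarter unfolding a_def t_def by simp
  have "(17/16 * a) ^ d \<le> (9/8) ^ d" by (rule power_mono) (use ab apos in auto)
  moreover have "(17/16 * a) ^ d = (17/16) ^ d * a ^ d" by (rule power_mult_distrib)
  ultimately have "(17/16) ^ d * a ^ d \<le> exp m" using m2 by linarith
  then have "real (card A) * ((17/16) ^ d * a ^ d) \<le> real (order G) * a ^ d"
    using main by (meson mult_left_mono of_nat_0_le_iff order_trans)
  then have "(real (card A) * (17/16) ^ d) * a ^ d \<le> real (order G) * a ^ d" by (simp add: mult_ac)
  then show ?thesis unfolding d_def using apos by (simp add: mult_le_cancel_right)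
qed

lemma cpw_norm: "\<gamma> \<in> Gh \<Longrightarrow> x \<in> carrier G \<Longrightarrow> cmod (cpw (\<gamma> x) e) = 1"
  by (simp add: cpw_def char_norm)

lemma cpw_dist: "cmod (cpw z e - 1) \<le> cmod (z - 1)"
proof -
  have "cmod (cnj z - 1) = cmod (z - 1)" by (metis complex_cnj_diff complex_cnj_one complex_mod_cnj)
  then show ?thesis by (simp add: cpw_def)
qed

lemma span_bound:
  assumes SG: "S \<subseteq> Gh" and L: "L \<subseteq> S" "dissoc L"
    and maxl: "\<forall>L'. L' \<subseteq> S \<and> dissoc L' \<longrightarrow> card L' \<le> card L"
    and g: "\<gamma> \<in> S" and x: "x \<in> carrier G" and bx: "\<forall>l\<in>L. cmod (l x - 1) \<le> r"
  shows "cmod (\<gamma> x - 1) \<le> real (card L) * r"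
proof -
  have fS: "finite S" using SG finite_characters finite_subset by blast
  have fL: "finite L" using L(1) fS finite_subset by blast
  have LG: "L \<subseteq> Gh" using L(1) SG by blast
  show ?thesis
  proof (cases "\<gamma> \<in> L")
    case True
    then have "card L \<noteq> 0" using fL by auto
    then have c1: "1 \<le> real (card L)" by simp
    have h: "cmod (\<gamma> x - 1) \<le> r" using bx True by blast
    then have r0: "0 \<le> r" using norm_ge_zero order_trans by blast
    have "1 * r \<le> real (card L) * r" by (rule mult_right_mono[OF c1 r0])
    then show ?thesis using h by simp
  next
    case False
    have sub: "insert \<gamma> L \<subseteq> S" using g L(1) by blast
    have "card (insert \<gamma> L) = Suc (card L)" using False fL by simp
    have nd: "\<not> dissoc (insert \<gamma> L)"
    proof
      assume "dissoc (insert \<gamma> L)"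
      then have "card (insert \<gamma> L) \<le> card L" using maxl sub by blast
      then show False using \<open>card (insert \<gamma> L) = Suc (card L)\<close> by simp
    qed
    have "insert \<gamma> L \<subseteq> Gh" using sub SG by blast
    then obtain \<epsilon> :: "('a \<Rightarrow> complex) \<Rightarrow> int" where e1: "\<forall>l\<in>insert \<gamma> L. \<epsilon> l \<in> {-1,0,1}"
      and e2: "\<forall>y\<in>carrier G. (\<Prod>l\<in>insert \<gamma> L. cpw (l y) (\<epsilon> l)) = 1"
      and e3: "\<not> (\<forall>l\<in>insert \<gamma> L. \<epsilon> l = 0)"
      using nd unfolding dissoc_def by blast
    have pi: "(\<Prod>l\<in>insert \<gamma> L. cpw (l y) (\<epsilon> l)) = cpw (\<gamma> y) (\<epsilon> \<gamma>) * (\<Prod>l\<in>L. cpw (l y) (\<epsilon> l))" for y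
      using fL False by simp
    have eg: "\<epsilon> \<gamma> \<noteq> 0"
    proof
      assume e0: "\<epsilon> \<gamma> = 0"
      then have "\<forall>y\<in>carrier G. (\<Prod>l\<in>L. cpw (l y) (\<epsilon> l)) = 1" using e2 pi by (simp add: cpw_def)
      moreover have "\<forall>l\<in>L. \<epsilon> l \<in> {-1,0,1}" using e1 by blast
      ultimately have "\<forall>l\<in>L. \<epsilon> l = 0" using L(2) unfolding dissoc_def by blast
      then show False using e3 e0 by blast
    qed
    define p where "p = (\<Prod>l\<in>L. cpw (l x) (\<epsilon> l))"
    define q where "q = cpw (\<gamma> x) (\<epsilon> \<gamma>)"
    have gG: "\<gamma> \<in> Gh" using g SG by blast
    have qp: "q * p = 1" using e2 pi x unfolding p_def q_def by simp
    have q1: "cmod q = 1" unfolding q_def using cpw_norm[OF gG x] .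
    have qg: "q = \<gamma> x \<or> q = cnj (\<gamma> x)" using e1 eg unfolding q_def cpw_def by auto
    have "cmod (q - 1) = cmod (\<gamma> x - 1)"
      using qg by (metis complex_cnj_diff complex_cnj_one complex_mod_cnj)
    moreover have "q - 1 = q * (1 - p)" using qp by (simp add: algebra_simps)
    then have "cmod (q - 1) = cmod (p - 1)" using q1 by (simp add: norm_mult norm_minus_commute)
    moreover have "cmod (p - 1) \<le> (\<Sum>l\<in>L. cmod (cpw (l x) (\<epsilon> l) - 1))"
    proof -
      have "cmod ((\<Prod>l\<in>L. cpw (l x) (\<epsilon> l)) - (\<Prod>l\<in>L. 1)) \<le> (\<Sum>l\<in>L. cmod (cpw (l x) (\<epsilon> l) - 1))"
        by (rule norm_prod_diff) (use cpw_norm LG x in auto)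
      then show ?thesis unfolding p_def by simp
    qed
    moreover have "(\<Sum>l\<in>L. cmod (cpw (l x) (\<epsilon> l) - 1)) \<le> (\<Sum>l\<in>L. r)"
    proof (rule sum_mono)
      fix l assume "l \<in> L"
      then have "cmod (l x - 1) \<le> r" using bx by blast
      then show "cmod (cpw (l x) (\<epsilon> l) - 1) \<le> r" using cpw_dist[of "l x" "\<epsilon> l"] by linarith
    qed
    ultimately show ?thesis by simp
  qed
qed

lemma bohr_in_kdiff:
  assumes A: "A \<subseteq> carrier G" "A \<noteq> {}" and k: "k = Suc K"
    and big: "2 * real (order G) < real (card A) * 4 ^ K"
    and x: "x \<in> carrier G"
    and good: "\<forall>\<gamma>\<in>Gh. real (card A) / 2 \<le> cmod (ft A \<gamma>) \<longrightarrow> 1/2 \<le> Re (\<gamma> x)"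
  shows "x \<in> kdiff G k A"
proof (rule ccontr)
  assume nx: "x \<notin> kdiff G k A"
  have fA: "finite A" using A(1) fin finite_subset by blast
  define n where "n = real (card A)"
  have "0 < card A" using fA A(2) by (simp add: card_gt_0_iff)
  then have npos: "0 < n" unfolding n_def by simp
  define S where "S = {\<gamma>\<in>Gh. n / 2 \<le> cmod (ft A \<gamma>)}"
  define f where "f \<gamma> = cmod (ft A \<gamma>) ^ (2 * k) * Re (\<gamma> x)" for \<gamma>
  have fS: "finite S" unfolding S_def using finite_characters by simp
  have "(\<Sum>\<gamma>\<in>Gh. ft A \<gamma> ^ k * cnj (ft A \<gamma>) ^ k * cnj (\<gamma> x)) = 0" by (rule vanish[OF A(1) x nx])
  then have R0: "Re (\<Sum>\<gamma>\<in>Gh. ft A \<gamma> ^ k * cnj (ft A \<gamma>) ^ k * cnj (\<gamma> x)) = 0"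
    by (simp only: zero_complex.sel(1))
  have fg: "Re (ft A \<gamma> ^ k * cnj (ft A \<gamma>) ^ k * cnj (\<gamma> x)) = f \<gamma>" for \<gamma>
  proof -
    have "ft A \<gamma> ^ k * cnj (ft A \<gamma>) ^ k = (ft A \<gamma> * cnj (ft A \<gamma>)) ^ k" by (simp only: power_mult_distrib)
    also have "\<dots> = complex_of_real ((cmod (ft A \<gamma>))\<^sup>2) ^ k" by (simp only: complex_norm_square)
    also have "\<dots> = complex_of_real (cmod (ft A \<gamma>) ^ (2 * k))" by (simp only: of_real_power power_mult)
    finally have eq: "ft A \<gamma> ^ k * cnj (ft A \<gamma>) ^ k = complex_of_real (cmod (ft A \<gamma>) ^ (2 * k))" .
    show ?thesis unfolding f_def eq by simp
  qed
  have sum0: "(\<Sum>\<gamma>\<in>Gh. f \<gamma>) = 0" using R0 by (simp only: Re_sum fg)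
  have split: "(\<Sum>\<gamma>\<in>Gh. f \<gamma>) = (\<Sum>\<gamma>\<in>S. f \<gamma>) + (\<Sum>\<gamma>\<in>Gh - S. f \<gamma>)"
  proof -
    have SG: "S \<subseteq> Gh" unfolding S_def by auto
    show ?thesis using sum.subset_diff[OF SG finite_characters, of f] by (simp add: add.commute)
  qed
  have trivS: "triv \<in> S"
  proof -
    have "ft A triv = (\<Sum>a\<in>A. 1)" unfolding ft_def triv_def
      by (rule sum.cong[OF refl]) (use A(1) in auto)
    then have "ft A triv = of_nat (card A)" by simp
    then show ?thesis unfolding S_def n_def using triv_char npos by simp
  qed
  have fnn: "0 \<le> f \<gamma>" if "\<gamma> \<in> S" for \<gamma>
  proof -
    have "1/2 \<le> Re (\<gamma> x)" using good that unfolding S_def n_def by blast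
    then show ?thesis unfolding f_def by simp
  qed
  have fnn2: "\<And>y. y \<in> S - {triv} \<Longrightarrow> 0 \<le> f y" using fnn by blast
  have "f triv \<le> (\<Sum>\<gamma>\<in>S. f \<gamma>)" by (rule member_le_sum[OF trivS fnn2 fS])
  moreover have "f triv = n ^ (2 * k)"
  proof -
    have "ft A triv = (\<Sum>a\<in>A. 1)" unfolding ft_def triv_def
      by (rule sum.cong[OF refl]) (use A(1) in auto)
    then have t1: "ft A triv = of_nat (card A)" by simp
    have t2: "triv x = 1" using x by (simp add: triv_def)
    show ?thesis unfolding f_def n_def t1 t2 by simp
  qed
  ultimately have lowS: "n ^ (2 * k) \<le> (\<Sum>\<gamma>\<in>S. f \<gamma>)" by simp
  have lowR: "- ((n / 2) ^ (2 * K) * (real (order G) * n)) \<le> (\<Sum>\<gamma>\<in>Gh - S. f \<gamma>)"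
  proof -
    have t1: "- ((n / 2) ^ (2 * K) * (cmod (ft A \<gamma>))\<^sup>2) \<le> f \<gamma>" if "\<gamma> \<in> Gh - S" for \<gamma>
    proof -
      have gG: "\<gamma> \<in> Gh" and small: "cmod (ft A \<gamma>) < n / 2" using that unfolding S_def by auto
      have "\<bar>Re (\<gamma> x)\<bar> \<le> 1" using abs_Re_le_cmod[of "\<gamma> x"] char_norm[OF gG x] by simp
      then have "cmod (ft A \<gamma>) ^ (2 * k) * (-1) \<le> cmod (ft A \<gamma>) ^ (2 * k) * Re (\<gamma> x)"
        by (intro mult_left_mono) auto
      then have "- (cmod (ft A \<gamma>) ^ (2 * k)) \<le> f \<gamma>" unfolding f_def by simp
      moreover have "cmod (ft A \<gamma>) ^ (2 * k) = cmod (ft A \<gamma>) ^ (2 * K) * (cmod (ft A \<gamma>))\<^sup>2"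
        unfolding k by (simp add: power_add[symmetric])
      moreover have "cmod (ft A \<gamma>) ^ (2 * K) \<le> (n / 2) ^ (2 * K)"
        using small by (intro power_mono) auto
      moreover have "cmod (ft A \<gamma>) ^ (2 * K) * (cmod (ft A \<gamma>))\<^sup>2 \<le> (n / 2) ^ (2 * K) * (cmod (ft A \<gamma>))\<^sup>2"
        by (rule mult_right_mono[OF \<open>cmod (ft A \<gamma>) ^ (2 * K) \<le> (n / 2) ^ (2 * K)\<close>]) simp
      ultimately show ?thesis by linarith
    qed
    have "- ((n / 2) ^ (2 * K) * (real (order G) * n)) = - ((n / 2) ^ (2 * K) * (\<Sum>\<gamma>\<in>Gh. (cmod (ft A \<gamma>))\<^sup>2))"
      using parseval[OF A(1)] card_chars unfolding n_def by simp
    also have "\<dots> \<le> - ((n / 2) ^ (2 * K) * (\<Sum>\<gamma>\<in>Gh - S. (cmod (ft A \<gamma>))\<^sup>2))"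
    proof -
      have "(\<Sum>\<gamma>\<in>Gh - S. (cmod (ft A \<gamma>))\<^sup>2) \<le> (\<Sum>\<gamma>\<in>Gh. (cmod (ft A \<gamma>))\<^sup>2)"
        by (rule sum_mono2[OF finite_characters]) auto
      moreover have "0 \<le> (n / 2) ^ (2 * K)" using npos by simp
      ultimately have "(n / 2) ^ (2 * K) * (\<Sum>\<gamma>\<in>Gh - S. (cmod (ft A \<gamma>))\<^sup>2) \<le> (n / 2) ^ (2 * K) * (\<Sum>\<gamma>\<in>Gh. (cmod (ft A \<gamma>))\<^sup>2)"
        by (intro mult_left_mono)
      then show ?thesis by linarith
    qed
    also have "\<dots> = (\<Sum>\<gamma>\<in>Gh - S. - ((n / 2) ^ (2 * K) * (cmod (ft A \<gamma>))\<^sup>2))"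
      by (simp add: sum_distrib_left sum_negf)
    also have "\<dots> \<le> (\<Sum>\<gamma>\<in>Gh - S. f \<gamma>)" by (intro sum_mono t1)
    finally show ?thesis .
  qed
  have "(n / 2) ^ (2 * K) * (real (order G) * n) < n ^ (2 * k)"
  proof -
    have p4: "(n / 2) ^ (2 * K) = n ^ (2 * K) / 4 ^ K"
      by (simp add: power_divide power_mult)
    have "n ^ (2 * k) = n ^ (2 * K + 2)" using k by simp
    also have "\<dots> = n ^ (2 * K) * n ^ 2" by (simp only: power_add)
    also have "\<dots> = n ^ (2 * K) * n * n" by (simp add: power2_eq_square mult.assoc)
    finally have "n ^ (2 * k) = n ^ (2 * K) * n * n" .
    moreover have "real (order G) * n / 4 ^ K < n * n"
    proof -
      have "real (order G) < n * 4 ^ K / 2" using big unfolding n_def by simp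
      then have "real (order G) * n < n * 4 ^ K / 2 * n" using npos by (rule mult_strict_right_mono)
      also have "\<dots> \<le> n * n * 4 ^ K" using npos by simp
      finally show ?thesis by (simp add: divide_less_eq mult_ac)
    qed
    moreover have "0 < n ^ (2 * K)" using npos by simp
    ultimately have "n ^ (2 * K) * (real (order G) * n / 4 ^ K) < n ^ (2 * K) * (n * n)"
      by (intro mult_strict_left_mono) auto
    moreover have "n ^ (2 * K) / 4 ^ K * (real (order G) * n) = n ^ (2 * K) * (real (order G) * n / 4 ^ K)" by simp
    ultimately show ?thesis unfolding p4 using \<open>n ^ (2 * k) = n ^ (2 * K) * n * n\<close> by (simp add: mult.assoc)
  qed
  then show False using sum0 split lowS lowR by linarith
qed

end

lemma ln2_gt_half: "1/2 < ln (2::real)"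
proof -
  have "exp (1/2::real) \<le> 1 + 1/2 + (1/2)\<^sup>2" by (rule exp_bound) auto
  then have "exp (1/2::real) < 2" by (simp add: power2_eq_square)
  then have "ln (exp (1/2::real)) < ln 2" by (subst ln_less_cancel_iff) auto
  then show ?thesis by simp
qed

lemma ln4_ge_1: "1 \<le> ln (4::real)"
proof -
  have "exp (1::real) \<le> 1 + 1 + 1\<^sup>2" by (rule exp_bound) auto
  then have "exp (1::real) \<le> 4" by simp
  then show ?thesis by (subst ln_ge_iff) auto
qed

theorem lemmaB14:
  shows "\<exists>c C::real. c > 0 \<and> C > 0 \<and>
    (\<forall>(G :: nat monoid) A. comm_group G \<and> finite (carrier G) \<and> A \<subseteq> carrier G \<and> A \<noteq> {} \<longrightarrow>
      (let \<alpha> = real (card A) / real (card (carrier G)) in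
       \<exists>S \<rho> k. S \<subseteq> characters G \<and> finite S \<and> real (card S) \<le> C * ln (2 / \<alpha>)
         \<and> \<rho> \<ge> c / ln (2 / \<alpha>)
         \<and> k \<ge> (1::nat) \<and> real k \<le> C * ln (2 / \<alpha>)
         \<and> bohr_set G S \<rho> \<subseteq> kdiff G k A))"
proof (rule exI[of _ "1/34::real"], rule exI[of _ "20::real"], intro conjI allI impI)
  show "(0::real) < 1/34" by simp
  show "(0::real) < 20" by simp
  fix G :: "nat monoid" and A
  assume H: "comm_group G \<and> finite (carrier G) \<and> A \<subseteq> carrier G \<and> A \<noteq> {}"
  interpret F: fab G using H by (simp add: fab_def fab_axioms_def)
  have AG: "A \<subseteq> carrier G" and Ane: "A \<noteq> {}" using H by auto
  define N where "N = real (card (carrier G))"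
  define n where "n = real (card A)"
  define \<alpha> where "\<alpha> = n / N"
  define L where "L = ln (2 / \<alpha>)"
  have fA: "finite A" using AG F.fin finite_subset by blast
  have "0 < card A" using fA Ane by (simp add: card_gt_0_iff)
  then have npos: "0 < n" unfolding n_def by simp
  have "card A \<le> card (carrier G)" using AG F.fin by (rule card_mono[rotated])
  then have nN: "n \<le> N" unfolding n_def N_def by simp
  have Npos: "0 < N" using npos nN by linarith
  have apos: "0 < \<alpha>" unfolding \<alpha>_def using npos Npos by simp
  have a1: "\<alpha> \<le> 1" unfolding \<alpha>_def using nN Npos by simp
  have twoa: "2 / \<alpha> = 2 * N / n" unfolding \<alpha>_def using npos Npos by simp
  have L2: "ln 2 \<le> L" unfolding L_def using apos a1 by (subst ln_le_cancel_iff) (auto simp: field_simps)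
  then have Lh: "1/2 < L" using ln2_gt_half by linarith
  then have Lpos: "0 < L" by simp
  have "0 < 2 / \<alpha>" using apos by simp
  then have "exp L = 2 / \<alpha>" unfolding L_def by simp
  then have expL: "exp L = 2 * N / n" using twoa by simp
  define Spec where "Spec = {\<gamma>\<in>F.Gh. n / 2 \<le> cmod (F.ft A \<gamma>)}"
  have SpG: "Spec \<subseteq> F.Gh" unfolding Spec_def by auto
  have fSp: "finite Spec" using SpG F.finite_characters finite_subset by blast
  define D where "D = {L'. L' \<subseteq> Spec \<and> F.dissoc L'}"
  have fD: "finite D" unfolding D_def using fSp by simp
  have "{} \<in> D" unfolding D_def F.dissoc_def by simp
  then have neD: "card ` D \<noteq> {}" by blast
  define m where "m = Max (card ` D)"
  have "m \<in> card ` D" unfolding m_def using fD neD by (intro Max_in) auto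
  then obtain \<Lambda> where \<Lambda>D: "\<Lambda> \<in> D" and cm: "card \<Lambda> = m" by blast
  have maxl: "\<forall>L'. L' \<subseteq> Spec \<and> F.dissoc L' \<longrightarrow> card L' \<le> card \<Lambda>"
  proof (intro allI impI)
    fix L' assume "L' \<subseteq> Spec \<and> F.dissoc L'"
    then have "card L' \<in> card ` D" unfolding D_def by blast
    then show "card L' \<le> card \<Lambda>" unfolding cm m_def using fD by simp
  qed
  have \<Lambda>S: "\<Lambda> \<subseteq> Spec" and \<Lambda>d: "F.dissoc \<Lambda>" using \<Lambda>D unfolding D_def by auto
  have f\<Lambda>: "finite \<Lambda>" using \<Lambda>S fSp finite_subset by blast
  define d where "d = real (card \<Lambda>)"
  have "real (card A) * (17/16) ^ card \<Lambda> \<le> real (order G)"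
    by (rule F.chang[OF AG Ane f\<Lambda> \<Lambda>d]) (use \<Lambda>S in \<open>auto simp: Spec_def n_def\<close>)
  then have ch: "n * (17/16) ^ card \<Lambda> \<le> N" unfolding n_def N_def order_def .
  have dL: "d \<le> 17 * L"
  proof -
    have "(17/16::real) ^ card \<Lambda> \<le> N / n" using ch npos by (simp add: field_simps)
    then have "ln ((17/16::real) ^ card \<Lambda>) \<le> ln (N / n)" using npos Npos by (subst ln_le_cancel_iff) auto
    then have "d * ln (17/16) \<le> ln (N / n)" unfolding d_def by (simp add: ln_realpow)
    moreover have "ln (N / n) \<le> L" unfolding L_def twoa using npos Npos by (subst ln_le_cancel_iff) (auto simp: field_simps)
    moreover have "d / 17 \<le> d * ln (17/16)" using ln_17_16 unfolding d_def
      by (metis mult_left_mono of_nat_0_le_iff times_divide_eq_right mult_1_right)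
    ultimately show ?thesis by linarith
  qed
  define \<rho> where "\<rho> = 1 / (34 * L)"
  define K where "K = nat \<lfloor>L\<rfloor> + 1"
  define k where "k = Suc K"
  have KL: "L < real K"
  proof -
    have "L < real_of_int \<lfloor>L\<rfloor> + 1" by linarith
    moreover have "real_of_int \<lfloor>L\<rfloor> = real (nat \<lfloor>L\<rfloor>)" using Lpos by simp
    ultimately show ?thesis unfolding K_def by simp
  qed
  have KL2: "real K \<le> L + 1"
  proof -
    have "real_of_int \<lfloor>L\<rfloor> \<le> L" by simp
    moreover have "real_of_int \<lfloor>L\<rfloor> = real (nat \<lfloor>L\<rfloor>)" using Lpos by simp
    ultimately show ?thesis unfolding K_def by simp
  qed
  have big: "2 * real (order G) < real (card A) * 4 ^ K"
  proof -
    have "exp L \<le> exp (L * ln 4)" using ln4_ge_1 Lpos by (simp add: mult_le_cancel_left1)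
    also have "exp (L * ln 4) = 4 powr L" by (simp add: powr_def mult.commute)
    also have "4 powr L < 4 powr real K" using KL by (simp add: powr_less_cancel_iff)
    also have "4 powr real K = (4::real) ^ K" by (simp add: powr_realpow)
    finally have "2 * N / n < 4 ^ K" using expL by simp
    then have "2 * N < n * 4 ^ K" using npos by (simp add: divide_less_eq mult.commute)
    then show ?thesis unfolding n_def N_def order_def by simp
  qed
  show "let \<alpha> = real (card A) / real (card (carrier G)) in
       \<exists>S \<rho> k. S \<subseteq> characters G \<and> finite S \<and> real (card S) \<le> 20 * ln (2 / \<alpha>)
         \<and> \<rho> \<ge> 1 / 34 / ln (2 / \<alpha>)
         \<and> k \<ge> (1::nat) \<and> real k \<le> 20 * ln (2 / \<alpha>)
         \<and> bohr_set G S \<rho> \<subseteq> kdiff G k A"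
    unfolding Let_def
  proof (intro exI[of _ \<Lambda>] exI[of _ \<rho>] exI[of _ k] conjI)
    have L': "ln (2 / (real (card A) / real (card (carrier G)))) = L" unfolding L_def \<alpha>_def n_def N_def ..
    show "\<Lambda> \<subseteq> characters G" using \<Lambda>S SpG by blast
    show "finite \<Lambda>" by (fact f\<Lambda>)
    show "real (card \<Lambda>) \<le> 20 * ln (2 / (real (card A) / real (card (carrier G))))"
      unfolding L' using dL Lpos unfolding d_def by linarith
    show "1 / 34 / ln (2 / (real (card A) / real (card (carrier G)))) \<le> \<rho>"
      unfolding L' \<rho>_def by simp
    show "1 \<le> k" unfolding k_def by simp
    show "real k \<le> 20 * ln (2 / (real (card A) / real (card (carrier G))))"
      unfolding L' k_def using KL2 Lh by simp
    show "bohr_set G \<Lambda> \<rho> \<subseteq> kdiff G k A"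
    proof
      fix x assume "x \<in> bohr_set G \<Lambda> \<rho>"
      then have x: "x \<in> carrier G" and bx: "\<forall>l\<in>\<Lambda>. cmod (l x - 1) \<le> \<rho>" unfolding bohr_set_def by auto
      have good: "\<forall>\<gamma>\<in>F.Gh. real (card A) / 2 \<le> cmod (F.ft A \<gamma>) \<longrightarrow> 1/2 \<le> Re (\<gamma> x)"
      proof (intro ballI impI)
        fix \<gamma> assume g: "\<gamma> \<in> F.Gh" and sp: "real (card A) / 2 \<le> cmod (F.ft A \<gamma>)"
        then have gS: "\<gamma> \<in> Spec" unfolding Spec_def n_def by simp
        have "cmod (\<gamma> x - 1) \<le> d * \<rho>" unfolding d_def
          by (rule F.span_bound[OF SpG \<Lambda>S \<Lambda>d maxl gS x bx])
        also have "d * \<rho> \<le> 17 * L * \<rho>" using dL unfolding \<rho>_def using Lpos by (intro mult_right_mono) auto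
        also have "17 * L * \<rho> = 1/2" unfolding \<rho>_def using Lpos by simp
        finally have "cmod (\<gamma> x - 1) \<le> 1/2" .
        moreover have "\<bar>Re (\<gamma> x - 1)\<bar> \<le> cmod (\<gamma> x - 1)" by (rule abs_Re_le_cmod)
        ultimately show "1/2 \<le> Re (\<gamma> x)" by simp
      qed
      show "x \<in> kdiff G k A" by (rule F.bohr_in_kdiff[OF AG Ane k_def big x good])
    qed
  qed
qed

end
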